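(* Let the setting, algorithm and notation be as described in the context, and assume $\frac12\widehat\Sigma_g+T\succeq0$. Then for every $k\ge1$, \[ (1-\tau)\sigma\|r^{k+1}\|^2+\sigma\|A^*x^{k+1}+B^*y^k-c\|^2\ \ge\ \max(1-\tau,1-\tau^{-1})\,\sigma\big(\|r^{k+1}\|^2-\|r^k\|^2\big)+(\xi_{k+1}-\xi_k)+\min(\tau,1+\tau-\tau^2)\,\sigma\big(\tau^{-1}\|r^{k+1}\|^2+\|B^*(y^{k+1}-y^k)\|^2\big). \]
   Context: Let $\mathcal X,\mathcal Y,\mathcal Z$ be finite-dimensional real Euclidean spaces with inner products $\langle\cdot,\cdot\rangle$ and induced norms $\|\cdot\|$. Let $p:\mathcal X\to(-\infty,+\infty]$ and $q:\mathcal Y\to(-\infty,+\infty]$ be closed proper convex functions, and let $f:\mathcal X\to\mathbb R$, $g:\mathcal Y\to\mathbb R$ be convex differentiable functions with Lipschitz continuous gradients. Let $A:\mathcal Z\to\mathcal X$, $B:\mathcal Z\to\mathcal Y$ be linear maps with adjoints $A^*,B^*$, and $c\in\mathcal Z$. Let $\Sigma_f,\widehat\Sigma_f$ (on $\mathcal X$) and $\Sigma_g,\widehat\Sigma_g$ (on $\mathcal Y$) be self-adjoint positive semidefinite linear operators with $\widehat\Sigma_f\succeq\Sigma_f$, $\widehat\Sigma_g\succeq\Sigma_g$, such that for all $x,x'\in\mathcal X$, $y,y'\in\mathcal Y$: $f(x')+\langle x-x',\nabla f(x')\rangle+\frac12\|x-x'\|^2_{\Sigma_f}\le f(x)\le f(x')+\langle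 x-x',\nabla f(x')\rangle+\frac12\|x-x'\|^2_{\widehat\Sigma_f}$ and the analogous two inequalities for $g$ with $\Sigma_g,\widehat\Sigma_g$. For a self-adjoint (possibly indefinite) operator $G$, $\|u\|_G^2:=\langle u,Gu\rangle$. Algorithm (Majorized iPADMM): let $\sigma>0$, $\tau>0$, and let $S:\mathcal X\to\mathcal X$, $T:\mathcal Y\to\mathcal Y$ be self-adjoint, possibly indefinite, linear operators with $\widehat\Sigma_f+S+\sigma AA^*\succeq0$ and $\widehat\Sigma_g+T+\sigma BB^*\succeq0$. Starting from $(x^0,y^0,z^0)\in\mathrm{dom}(p)\times\mathrm{dom}(q)\times\mathcal Z$, for $k=0,1,\dots$: $x^{k+1}\in\arg\min_{x}\{p(x)+\langle\nabla f(x^k),x\rangle+\frac12\|x-x^k\|^2_{\widehat\Sigma_f+S}+\langle z^k,A^*x\rangle+\frac\sigma2\|A^*x+B^*y^k-c\|^2\}$, $y^{k+1}\in\arg\min_{y}\{q(y)+\langle\nabla g(y^k),y\rangle+\frac12\|y-y^k\|^2_{\widehat\Sigma_g+T}+\langle z^k,B^*y\rangle+\frac\sigma2\|A^*x^{k+1}+B^*y-c\|^2\}$, $z^{k+1}=z^k+\tau\sigma(A^*x^{k+1}+B^*y^{k+1}-c)$ (the minimizers are assumed to exist). Notation: $r^k:=A^*x^k+B^*y^k-c$ and $\xi_{k+1}:=\|y^{k+1}-y^k\|^2_{\widehat\Sigma_g+T}$. *)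

theory Defs
  imports "HOL-Analysis.Analysis"
begin

definition epigraph_e :: "('a \<Rightarrow> ereal) \<Rightarrow> ('a \<times> real) set" where
  "epigraph_e p = {(x, t). p x \<le> ereal t}"

definition closed_proper_convex :: "('a::real_normed_vector \<Rightarrow> ereal) \<Rightarrow> bool" where
  "closed_proper_convex p \<longleftrightarrow>
     (\<forall>x. p x \<noteq> -\<infinity>) \<and> (\<exists>x. p x \<noteq> \<infinity>) \<and>
     convex (epigraph_e p) \<and> closed (epigraph_e p)"

definition self_adjoint :: "('a::real_inner \<Rightarrow> 'a) \<Rightarrow> bool" where
  "self_adjoint G \<longleftrightarrow> linear G \<and> (\<forall>u v. G u \<bullet> v = u \<bullet> G v)"

definition psd :: "('a::real_inner \<Rightarrow> 'a) \<Rightarrow> bool" where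
  "psd G \<longleftrightarrow> (\<forall>u. 0 \<le> u \<bullet> G u)"

definition qn :: "('a::real_inner \<Rightarrow> 'a) \<Rightarrow> 'a \<Rightarrow> real" where
  "qn G u = u \<bullet> G u"

definition argmin_e :: "('a \<Rightarrow> ereal) \<Rightarrow> 'a set" where
  "argmin_e F = {u. \<forall>v. F u \<le> F v}"

end

theory Submission imports Defs begin

lemma small_t:
  fixes a b K :: real
  assumes "\<And>t. 0 < t \<Longrightarrow> t \<le> 1 \<Longrightarrow> a \<le> b + t * K"
  shows "a \<le> b"
proof (rule ccontr)
  assume "\<not> a \<le> b"
  then have d: "a - b > 0" by simp
  show False
  proof (cases "K \<le> 0")
    case True
    from assms[of 1] True d show False by simp
  next
    case False
    define t where "t = min 1 ((a - b) / (2*K))"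
    have t0: "0 < t" using d False by (simp add: t_def)
    have t1: "t \<le> 1" by (simp add: t_def)
    have "t * K \<le> (a - b) / (2*K) * K" using False by (intro mult_right_mono) (auto simp: t_def)
    also have "\<dots> = (a - b)/2" using False by (simp add: field_simps)
    finally show False using assms[OF t0 t1] d by simp
  qed
qed

lemma argmin_lin:
  fixes q :: "'a::real_normed_vector \<Rightarrow> ereal" and h :: "'a \<Rightarrow> real" and L :: "'a \<Rightarrow> real"
  assumes cv: "convex (epigraph_e q)" and u: "u \<in> argmin_e (\<lambda>v. q v + ereal (h v))"
    and qu: "q u = ereal qu" and qv: "q v = ereal qv"
    and hexp: "\<And>t. h (u + t *\<^sub>R (v - u)) = h u + t * L (v - u) + t^2 * K"
  shows "qu \<le> qv + L (v - u)"
proof (rule small_t[where K=K])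
  fix t :: real assume t0: "0 < t" and t1: "t \<le> 1"
  define w where "w = u + t *\<^sub>R (v - u)"
  have eu: "(u, qu) \<in> epigraph_e q" using qu by (simp add: epigraph_e_def)
  have ev: "(v, qv) \<in> epigraph_e q" using qv by (simp add: epigraph_e_def)
  have "(1 - t) *\<^sub>R (u, qu) + t *\<^sub>R (v, qv) \<in> epigraph_e q"
    by (rule convexD[OF cv eu ev]) (use t0 t1 in auto)
  moreover have "(1 - t) *\<^sub>R (u, qu) + t *\<^sub>R (v, qv) = (w, (1-t)*qu + t*qv)"
    by (simp add: w_def algebra_simps)
  ultimately have "(w, (1-t)*qu + t*qv) \<in> epigraph_e q" by simp
  then have qw: "q w \<le> ereal ((1-t)*qu + t*qv)" by (simp add: epigraph_e_def)
  have "q u + ereal (h u) \<le> q w + ereal (h w)" using u by (simp add: argmin_e_def)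
  also have "\<dots> \<le> ereal ((1-t)*qu + t*qv) + ereal (h w)" using qw by (rule add_right_mono)
  finally have "qu + h u \<le> (1-t)*qu + t*qv + h w" using qu by simp
  then have "t * qu \<le> t * (qv + L (v - u) + t * K)" using hexp[of t] unfolding w_def
    by (simp add: algebra_simps power2_eq_square)
  then show "qu \<le> qv + L (v - u) + t * K" using t0 by simp
qed

lemma finite_argmin:
  fixes q :: "'a::real_normed_vector \<Rightarrow> ereal"
  assumes cp: "closed_proper_convex q" and u: "u \<in> argmin_e (\<lambda>v. q v + ereal (h v))"
    and v0: "q v0 \<noteq> \<infinity>"
  shows "q u = ereal (real_of_ereal (q u))"
proof -
  have "q u + ereal (h u) \<le> q v0 + ereal (h v0)" using u by (simp add: argmin_e_def)
  moreover have "q v0 + ereal (h v0) \<noteq> \<infinity>" using v0 by simp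
  ultimately have "q u \<noteq> \<infinity>" by auto
  moreover have "q u \<noteq> -\<infinity>" using cp by (simp add: closed_proper_convex_def)
  ultimately show ?thesis by (cases "q u") auto
qed

lemma qn_expand:
  assumes "self_adjoint G"
  shows "qn G (a + t *\<^sub>R e) = qn G a + 2*t*(G a \<bullet> e) + t^2 * qn G e"
proof -
  have lin: "linear G" and sym: "\<And>u v. G u \<bullet> v = u \<bullet> G v" using assms by (auto simp: self_adjoint_def)
  have "G (a + t *\<^sub>R e) = G a + t *\<^sub>R G e" using lin by (simp add: linear_add linear_scale)
  then show ?thesis unfolding qn_def
    by (simp add: inner_add_left inner_add_right sym[of a e] inner_commute[of e "G a"] algebra_simps power2_eq_square)
qed

lemma norm_expand:
  fixes a b :: "'a::real_inner"
  shows "(norm (a + t *\<^sub>R b))^2 = (norm a)^2 + 2*t*(a \<bullet> b) + t^2*(norm b)^2"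
  unfolding power2_norm_eq_inner by (simp add: inner_add_left inner_add_right inner_commute[of b a] algebra_simps power2_eq_square)

lemma three_point:
  fixes g :: "'a::real_inner \<Rightarrow> real"
  assumes gb: "\<And>u u'. g u' + (u - u') \<bullet> Dg u' + 1/2 * qn Sg (u - u') \<le> g u
                       \<and> g u \<le> g u' + (u - u') \<bullet> Dg u' + 1/2 * qn Sg' (u - u')"
    and ps: "psd Sg" and lin: "linear Sg'"
  shows "(Dg x - Dg x') \<bullet> ((x - x') + 2 *\<^sub>R w) \<ge> - qn Sg' w"
proof -
  have p: "\<And>v. 0 \<le> qn Sg v" using ps by (simp add: psd_def qn_def)
  have qneg: "qn Sg' (-w) = qn Sg' w" using lin by (simp add: qn_def linear_neg)
  have 1: "g x' + (x + w - x') \<bullet> Dg x' \<le> g (x + w)" using gb[where u="x + w" and u'=x'] p[of "x + w - x'"] by linarith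
  have 2: "g (x + w) \<le> g x + w \<bullet> Dg x + 1/2 * qn Sg' w" using gb[where u="x + w" and u'=x] by simp
  have 3: "g x + (x' - w - x) \<bullet> Dg x \<le> g (x' - w)" using gb[where u="x' - w" and u'=x] p[of "x' - w - x"] by linarith
  have 4: "g (x' - w) \<le> g x' + (- w) \<bullet> Dg x' + 1/2 * qn Sg' w" using gb[where u="x' - w" and u'=x'] qneg by simp
  from 1 2 3 4 show ?thesis
    by (simp add: inner_add_left inner_add_right inner_diff_left inner_diff_right inner_commute algebra_simps)
qed

lemma final_scalar:
  fixes \<sigma> \<tau> a b e m n X1 X2 :: real
  assumes s: "\<sigma> > 0" and t: "\<tau> > 0"
    and key: "2*\<sigma>*m - 2*(1-\<tau>)*\<sigma>*n \<le> X2 - X1"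
    and P1: "0 \<le> b + e - 2*n" and P2: "0 \<le> b + 2*\<tau>*n + \<tau>^2*e"
  shows "(1-\<tau>)*\<sigma>*a + \<sigma>*(a - 2*m + e) \<ge> max (1-\<tau>) (1-1/\<tau>)*\<sigma>*(a-b) + (X1 - X2)
           + min \<tau> (1+\<tau>-\<tau>^2)*\<sigma>*(1/\<tau>*a + e)"
proof (cases "\<tau> \<le> 1")
  case True
  have mx: "max (1-\<tau>) (1-1/\<tau>) = 1-\<tau>"
  proof -
    have "1/\<tau> \<ge> 1" using True t by (simp add: field_simps)
    then have "1 - 1/\<tau> \<le> 1 - \<tau>" using True by linarith
    then show ?thesis by (simp add: max_def)
  qed
  have mn: "min \<tau> (1+\<tau>-\<tau>^2) = \<tau>"
  proof -
    have "\<tau>^2 \<le> 1" using True t by (simp add: power_le_one)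
    then show ?thesis by simp
  qed
  have p: "0 \<le> \<sigma>*(1-\<tau>)*(b + e - 2*n)" using s True P1 by simp
  have "\<tau> * (1/\<tau>*a) = a" using t by simp
  then show ?thesis unfolding mx mn using key p t
    by (simp add: algebra_simps) 
next
  case False
  have mx: "max (1-\<tau>) (1-1/\<tau>) = 1-1/\<tau>"
  proof -
    have "1/\<tau> \<le> 1" using False t by (simp add: field_simps)
    then have "1 - \<tau> \<le> 1 - 1/\<tau>" using False by linarith
    then show ?thesis by (simp add: max_def)
  qed
  have mn: "min \<tau> (1+\<tau>-\<tau>^2) = 1+\<tau>-\<tau>^2"
  proof -
    have "\<tau>^2 \<ge> \<tau>" using False t by (simp add: power2_eq_square)
    then have "1+\<tau>-\<tau>^2 \<le> \<tau>" using False by linarith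
    then show ?thesis by (simp add: min_def)
  qed
  have p: "0 \<le> \<sigma>*(\<tau>-1)/\<tau>*(b + 2*\<tau>*n + \<tau>^2*e)" using s t False P2 by simp
  have eq: "(1-\<tau>)*\<sigma>*a + \<sigma>*(a - 2*m + e) - ((1-1/\<tau>)*\<sigma>*(a-b) + (X1 - X2)
           + (1+\<tau>-\<tau>^2)*\<sigma>*(1/\<tau>*a + e))
        = \<sigma>*(\<tau>-1)/\<tau>*(b + 2*\<tau>*n + \<tau>^2*e) + ((X2 - X1) - (2*\<sigma>*m - 2*(1-\<tau>)*\<sigma>*n))"
    using t by (simp add: field_simps power2_eq_square)
  show ?thesis unfolding mx mn using eq key p by linarith
qed

theorem lemma3p3:
  fixes p :: "'x::euclidean_space \<Rightarrow> ereal" and q :: "'y::euclidean_space \<Rightarrow> ereal"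
    and f :: "'x \<Rightarrow> real" and g :: "'y \<Rightarrow> real"
    and Df :: "'x \<Rightarrow> 'x" and Dg :: "'y \<Rightarrow> 'y"
    and A :: "'z::euclidean_space \<Rightarrow> 'x" and B :: "'z \<Rightarrow> 'y" and c :: 'z
    and Sf Sf' S :: "'x \<Rightarrow> 'x" and Sg Sg' T :: "'y \<Rightarrow> 'y"
    and \<sigma> \<tau> :: real
    and x :: "nat \<Rightarrow> 'x" and y :: "nat \<Rightarrow> 'y" and z :: "nat \<Rightarrow> 'z"
    and k :: nat
  assumes p: "closed_proper_convex p" and q: "closed_proper_convex q"
    and f_conv: "convex_on UNIV f" and g_conv: "convex_on UNIV g"
    and f_grad: "\<And>u. (f has_derivative (\<lambda>h. Df u \<bullet> h)) (at u)"
    and g_grad: "\<And>u. (g has_derivative (\<lambda>h. Dg u \<bullet> h)) (at u)"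
    and f_lip: "\<exists>L. \<forall>u v. norm (Df u - Df v) \<le> L * norm (u - v)"
    and g_lip: "\<exists>L. \<forall>u v. norm (Dg u - Dg v) \<le> L * norm (u - v)"
    and A_lin: "linear A" and B_lin: "linear B"
    and Sf: "self_adjoint Sf" "psd Sf" and Sf': "self_adjoint Sf'" "psd Sf'"
    and Sf_le: "psd (\<lambda>u. Sf' u - Sf u)"
    and Sg: "self_adjoint Sg" "psd Sg" and Sg': "self_adjoint Sg'" "psd Sg'"
    and Sg_le: "psd (\<lambda>u. Sg' u - Sg u)"
    and f_bounds: "\<And>u u'. f u' + (u - u') \<bullet> Df u' + 1/2 * qn Sf (u - u') \<le> f u
                       \<and> f u \<le> f u' + (u - u') \<bullet> Df u' + 1/2 * qn Sf' (u - u')"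
    and g_bounds: "\<And>u u'. g u' + (u - u') \<bullet> Dg u' + 1/2 * qn Sg (u - u') \<le> g u
                       \<and> g u \<le> g u' + (u - u') \<bullet> Dg u' + 1/2 * qn Sg' (u - u')"
    and \<sigma>: "\<sigma> > 0" and \<tau>: "\<tau> > 0"
    and S: "self_adjoint S" and T: "self_adjoint T"
    and S_psd: "psd (\<lambda>u. Sf' u + S u + \<sigma> *\<^sub>R A (adjoint A u))"
    and T_psd: "psd (\<lambda>u. Sg' u + T u + \<sigma> *\<^sub>R B (adjoint B u))"
    and x0: "p (x 0) \<noteq> \<infinity>" and y0: "q (y 0) \<noteq> \<infinity>"
    and x_step: "\<And>j. x (Suc j) \<in> argmin_e (\<lambda>u. p u + ereal (Df (x j) \<bullet> u
                   + 1/2 * qn (\<lambda>w. Sf' w + S w) (u - x j) + z j \<bullet> adjoint A u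
                   + \<sigma>/2 * (norm (adjoint A u + adjoint B (y j) - c))\<^sup>2))"
    and y_step: "\<And>j. y (Suc j) \<in> argmin_e (\<lambda>v. q v + ereal (Dg (y j) \<bullet> v
                   + 1/2 * qn (\<lambda>w. Sg' w + T w) (v - y j) + z j \<bullet> adjoint B v
                   + \<sigma>/2 * (norm (adjoint A (x (Suc j)) + adjoint B v - c))\<^sup>2))"
    and z_step: "\<And>j. z (Suc j) = z j + (\<tau> * \<sigma>) *\<^sub>R
                   (adjoint A (x (Suc j)) + adjoint B (y (Suc j)) - c)"
    and half_T: "psd (\<lambda>u. (1/2) *\<^sub>R Sg' u + T u)"
    and k: "k \<ge> 1"
  shows "let r = (\<lambda>j. adjoint A (x j) + adjoint B (y j) - c);
             \<xi> = (\<lambda>j. qn (\<lambda>w. Sg' w + T w) (y j - y (j - 1)))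
         in (1 - \<tau>) * \<sigma> * (norm (r (Suc k)))\<^sup>2
              + \<sigma> * (norm (adjoint A (x (Suc k)) + adjoint B (y k) - c))\<^sup>2
            \<ge> max (1 - \<tau>) (1 - 1/\<tau>) * \<sigma> * ((norm (r (Suc k)))\<^sup>2 - (norm (r k))\<^sup>2)
              + (\<xi> (Suc k) - \<xi> k)
              + min \<tau> (1 + \<tau> - \<tau>\<^sup>2) * \<sigma> * ((1/\<tau>) * (norm (r (Suc k)))\<^sup>2
                   + (norm (adjoint B (y (Suc k) - y k)))\<^sup>2)"
proof -
  obtain k0 where k0: "k = Suc k0" using k by (cases k) auto
  define H where "H = (\<lambda>w. Sg' w + T w)"
  have linSg': "linear Sg'" using Sg' by (simp add: self_adjoint_def)
  have linT: "linear T" using T by (simp add: self_adjoint_def)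
  have Hsa: "self_adjoint H" unfolding H_def self_adjoint_def
    using Sg' T by (auto simp: self_adjoint_def linear_compose_add inner_add_left inner_add_right)
  have linB: "linear (adjoint B)" by (rule adjoint_linear[OF B_lin])
  define L where "L = (\<lambda>j e. Dg (y j) \<bullet> e + H (y (Suc j) - y j) \<bullet> e + z j \<bullet> adjoint B e
      + \<sigma> * ((adjoint A (x (Suc j)) + adjoint B (y (Suc j)) - c) \<bullet> adjoint B e))"
  have stepI: "qu \<le> qv + L j (v - y (Suc j))"
    if qu: "q (y (Suc j)) = ereal qu" and qv: "q v = ereal qv" for j v qu qv
  proof (rule argmin_lin[where K = "1/2 * qn H (v - y (Suc j)) + \<sigma>/2 * (norm (adjoint B (v - y (Suc j))))^2"])
    show "convex (epigraph_e q)" using q by (simp add: closed_proper_convex_def)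
    show "y (Suc j) \<in> argmin_e (\<lambda>v. q v + ereal (Dg (y j) \<bullet> v
                   + 1/2 * qn H (v - y j) + z j \<bullet> adjoint B v
                   + \<sigma>/2 * (norm (adjoint A (x (Suc j)) + adjoint B v - c))\<^sup>2))"
      using y_step[of j] unfolding H_def .
    show "q (y (Suc j)) = ereal qu" by fact
    show "q v = ereal qv" by fact
    fix t :: real
    define u where "u = y (Suc j)"
    define e where "e = v - u"
    have e1: "u + t *\<^sub>R e - y j = (u - y j) + t *\<^sub>R e" by (simp add: algebra_simps)
    have e2: "adjoint A (x (Suc j)) + adjoint B (u + t *\<^sub>R e) - c
        = (adjoint A (x (Suc j)) + adjoint B u - c) + t *\<^sub>R adjoint B e"
      using linB by (simp add: linear_add linear_scale algebra_simps)
    have e3: "adjoint B (u + t *\<^sub>R e) = adjoint B u + t *\<^sub>R adjoint B e"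
      using linB by (simp add: linear_add linear_scale)
    have "Dg (y j) \<bullet> (u + t *\<^sub>R e) + 1/2 * qn H (u + t *\<^sub>R e - y j) + z j \<bullet> adjoint B (u + t *\<^sub>R e)
        + \<sigma>/2 * (norm (adjoint A (x (Suc j)) + adjoint B (u + t *\<^sub>R e) - c))\<^sup>2
        = (Dg (y j) \<bullet> u + 1/2 * qn H (u - y j) + z j \<bullet> adjoint B u
        + \<sigma>/2 * (norm (adjoint A (x (Suc j)) + adjoint B u - c))\<^sup>2)
        + t * L j e + t^2 * (1/2 * qn H e + \<sigma>/2 * (norm (adjoint B e))^2)"
      unfolding e1 e2 qn_expand[OF Hsa] norm_expand
      by (simp add: linear_add[OF linB] linear_scale[OF linB] L_def u_def inner_add_right algebra_simps)
    then show "Dg (y j) \<bullet> (y (Suc j) + t *\<^sub>R (v - y (Suc j))) + 1/2 * qn H (y (Suc j) + t *\<^sub>R (v - y (Suc j)) - y j)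
        + z j \<bullet> adjoint B (y (Suc j) + t *\<^sub>R (v - y (Suc j)))
        + \<sigma>/2 * (norm (adjoint A (x (Suc j)) + adjoint B (y (Suc j) + t *\<^sub>R (v - y (Suc j))) - c))\<^sup>2
        = (Dg (y j) \<bullet> y (Suc j) + 1/2 * qn H (y (Suc j) - y j) + z j \<bullet> adjoint B (y (Suc j))
        + \<sigma>/2 * (norm (adjoint A (x (Suc j)) + adjoint B (y (Suc j)) - c))\<^sup>2)
        + t * L j (v - y (Suc j)) + t^2 * (1/2 * qn H (v - y (Suc j)) + \<sigma>/2 * (norm (adjoint B (v - y (Suc j))))^2)"
      unfolding u_def e_def .
  qed
  have fin: "\<And>j. q (y (Suc j)) = ereal (real_of_ereal (q (y (Suc j))))"
    by (rule finite_argmin[OF q y_step y0])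
  define Q where "Q j = real_of_ereal (q (y (Suc j)))" for j
  define d where "d = y (Suc k) - y k"
  define d' where "d' = y k - y k0"
  define r where "r = (\<lambda>j. adjoint A (x j) + adjoint B (y j) - c)"
  define Bd where "Bd = adjoint B d"
  have s1: "Q k \<le> Q k0 + L k (y k - y (Suc k))"
    using stepI[of k "Q k" "y k" "Q k0"] fin[of k] fin[of k0] unfolding Q_def k0 by simp
  have s2: "Q k0 \<le> Q k + L k0 (y (Suc k) - y (Suc k0))"
    using stepI[of k0 "Q k0" "y (Suc k)" "Q k"] fin[of k] fin[of k0] unfolding Q_def k0 by simp
  have Lneg: "L k (y k - y (Suc k)) = - L k d"
  proof -
    have "y k - y (Suc k) = - d" by (simp add: d_def)
    then show ?thesis by (simp add: L_def linear_neg[OF linB] H_def)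
  qed
  have mono: "L k d \<le> L k0 d" using s1 s2 Lneg unfolding k0 d_def by simp
  define m where "m = r (Suc k) \<bullet> Bd"
  define n where "n = r k \<bullet> Bd"
  have zk: "z k \<bullet> Bd = z k0 \<bullet> Bd + \<tau> * \<sigma> * n"
    unfolding k0 z_step n_def r_def by (simp add: inner_add_left k0[symmetric])
  have Lk: "L k d = Dg (y k) \<bullet> d + H d \<bullet> d + z k \<bullet> Bd + \<sigma> * m"
    unfolding L_def m_def r_def Bd_def d_def by simp
  have Lk0: "L k0 d = Dg (y k0) \<bullet> d + H d' \<bullet> d + z k0 \<bullet> Bd + \<sigma> * n"
    unfolding L_def n_def r_def Bd_def d'_def k0 by simp
  have symS: "\<And>u v. Sg' u \<bullet> v = u \<bullet> Sg' v" using Sg' by (simp add: self_adjoint_def)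
  have symT: "\<And>u v. T u \<bullet> v = u \<bullet> T v" using T by (simp add: self_adjoint_def)
  define a1 where "a1 = d \<bullet> Sg' d"
  define a2 where "a2 = d' \<bullet> Sg' d'"
  define a3 where "a3 = d \<bullet> Sg' d'"
  define b1 where "b1 = d \<bullet> T d"
  define b2 where "b2 = d' \<bullet> T d'"
  define b3 where "b3 = d \<bullet> T d'"
  have a3': "d' \<bullet> Sg' d = a3" unfolding a3_def by (metis symS inner_commute)
  have b3': "d' \<bullet> T d = b3" unfolding b3_def by (metis symT inner_commute)
  have F1: "H d \<bullet> d = a1 + b1" unfolding H_def a1_def b1_def by (simp add: inner_add_left inner_commute[of "Sg' d" d] inner_commute[of "T d" d])
  have F2: "H d' \<bullet> d = a3 + b3" unfolding H_def a3_def b3_def by (simp add: inner_add_left inner_commute[of "Sg' d'" d] inner_commute[of "T d'" d])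
  have F3: "qn H d = a1 + b1" "qn H d' = a2 + b2"
    unfolding H_def qn_def a1_def b1_def a2_def b2_def by (simp_all add: inner_add_right)
  have F4: "qn Sg' ((1/2) *\<^sub>R (d - d')) = 1/4 * (a1 - 2*a3 + a2)"
    unfolding qn_def using a3' by (simp add: linear_scale[OF linSg'] linear_diff[OF linSg'] inner_diff_left inner_diff_right a1_def a2_def a3_def algebra_simps)
  have F5: "0 \<le> 1/2 * (a1 - 2*a3 + a2) + (b1 - 2*b3 + b2)"
  proof -
    have "0 \<le> (d - d') \<bullet> ((1/2) *\<^sub>R Sg' (d - d') + T (d - d'))"
      using half_T by (simp add: psd_def)
    then show ?thesis using a3' b3'
      by (simp add: linear_diff[OF linSg'] linear_diff[OF linT] inner_diff_left inner_diff_right inner_add_right a1_def a2_def a3_def b1_def b2_def b3_def algebra_simps)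
  qed
  have tp: "(Dg (y k) - Dg (y k0)) \<bullet> (d' + 2 *\<^sub>R ((1/2) *\<^sub>R (d - d'))) \<ge> - qn Sg' ((1/2) *\<^sub>R (d - d'))"
    unfolding d'_def by (rule three_point[OF g_bounds Sg(2) linSg'])
  have "d' + 2 *\<^sub>R ((1/2) *\<^sub>R (d - d')) = d" by simp
  with tp F4 have tp': "Dg (y k) \<bullet> d - Dg (y k0) \<bullet> d \<ge> - (1/4 * (a1 - 2*a3 + a2))"
    by (simp add: inner_diff_left)
  have mono': "Dg (y k) \<bullet> d + (a1 + b1) + (z k0 \<bullet> Bd + \<tau> * \<sigma> * n) + \<sigma> * m
      \<le> Dg (y k0) \<bullet> d + (a3 + b3) + z k0 \<bullet> Bd + \<sigma> * n"
    using mono unfolding Lk Lk0 zk F1 F2 .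
  have tp4: "4*(Dg (y k0) \<bullet> d - Dg (y k) \<bullet> d) \<le> a1 - 2*a3 + a2" using tp' by (simp add: field_simps)
  have F5': "0 \<le> a1 - 2*a3 + a2 + 2*b1 - 4*b3 + 2*b2" using F5 by (simp add: field_simps)
  have key0: "2*(\<sigma> * m + \<tau> * \<sigma> * n - \<sigma> * n) \<le> a2 + b2 - a1 - b1"
    using mono' F5' tp4 by (smt (verit))
  have "2*\<sigma>*m - 2*(1-\<tau>)*\<sigma>*n = 2*(\<sigma> * m + \<tau> * \<sigma> * n - \<sigma> * n)"
    by (simp add: algebra_simps)
  then have key: "2*\<sigma>*m - 2*(1-\<tau>)*\<sigma>*n \<le> qn H d' - qn H d"
    using key0 F3 by (smt (verit))
  have sdef: "adjoint A (x (Suc k)) + adjoint B (y k) - c = r (Suc k) - Bd"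
    unfolding r_def Bd_def d_def by (simp add: linear_diff[OF linB])
  have ns: "(norm (r (Suc k) - Bd))^2 = (norm (r (Suc k)))^2 - 2*m + (norm Bd)^2"
    unfolding m_def power2_norm_eq_inner by (simp add: inner_diff_left inner_diff_right inner_commute)
  have P1: "0 \<le> (norm (r k))^2 + (norm Bd)^2 - 2*n"
  proof -
    have "(norm (r k - Bd))^2 = (norm (r k))^2 + (norm Bd)^2 - 2*n"
      unfolding n_def power2_norm_eq_inner by (simp add: inner_diff_left inner_diff_right inner_commute)
    then show ?thesis by (metis zero_le_power2)
  qed
  have P2: "0 \<le> (norm (r k))^2 + 2*\<tau>*n + \<tau>^2*(norm Bd)^2"
  proof -
    have "(norm (r k + \<tau> *\<^sub>R Bd))^2 = (norm (r k))^2 + 2*\<tau>*n + \<tau>^2*(norm Bd)^2"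
      unfolding n_def by (rule norm_expand)
    then show ?thesis by (metis zero_le_power2)
  qed
  have xi1: "qn (\<lambda>w. Sg' w + T w) (y (Suc k) - y (Suc k - 1)) = qn H d"
    by (simp add: H_def d_def)
  have xi2: "qn (\<lambda>w. Sg' w + T w) (y k - y (k - 1)) = qn H d'"
    by (simp add: H_def d'_def k0)
  show ?thesis
    unfolding Let_def xi1 xi2 sdef ns r_def[symmetric] Bd_def[symmetric] d_def[symmetric]
    using final_scalar[OF \<sigma> \<tau> key P1 P2, of "(norm (r (Suc k)))^2"] by simp
qed

end
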